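(* Let $N$ be a positive even integer, $M_t,M_r$ positive integers, and $\theta\in\mathbb R$. Let $\hat{\mathbf G}_t\in\mathbb C^{N\times M_t}$ have i.i.d. circularly symmetric complex Gaussian entries of zero mean and unit variance. Let $\gamma_4^\star=\max_{\mathbf\Phi}\left(\|\hat{\mathbf G}_t^T\mathbf\Phi^T\mathbf a(\theta)\|^2\|\mathbf D_2\mathbf b(\theta)\|^2+\|\mathbf b(\theta)\|^2\|\hat{\mathbf G}_t^T\mathbf\Phi^T\mathbf D_1\mathbf a(\theta)\|^2\right)$, the maximum over all $\mathbf\Phi=\mathrm{diag}(e^{j\phi_1},\dots,e^{j\phi_N})$, $\phi_n\in\mathbb R$. Then $\frac{\pi M_rN^4}{16}+\frac{M_r(M_t-1)N^2}{2}\le\mathbb E[\gamma_4^\star]\le\frac{M_tM_r(M_r^2-1)N^2}{3}+\frac{M_tM_rN^2(N^2-1)}{3}.$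
   Context: $j=\sqrt{-1}$. Fix $\hat d>0$, $\lambda>0$. $\mathbf a(\theta)\in\mathbb C^N$ has $n$-th entry $e^{j\pi(2n-N-1)\hat d\sin\theta/\lambda}$; $\mathbf b(\theta)\in\mathbb C^{M_r}$ has $m$-th entry $e^{j\pi(2m-M_r-1)\hat d\sin\theta/\lambda}$; $\mathbf D_1=\mathrm{diag}(1-N,3-N,\dots,N-1)$ and $\mathbf D_2=\mathrm{diag}(1-M_r,3-M_r,\dots,M_r-1)$. *)

theory Defs
  imports "HOL-Probability.Probability"
begin

text \<open>Standard circularly symmetric complex Gaussian CN(0,1): real and imaginary
parts independent N(0,1/2).\<close>
definition cgauss :: "complex measure" where
  "cgauss = distr
     (density lborel (normal_density 0 (sqrt (1/2))) \<Otimes>\<^sub>M density lborel (normal_density 0 (sqrt (1/2))))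
     borel (\<lambda>(x, y). Complex x y)"

definition Gt_measure :: "nat \<Rightarrow> nat \<Rightarrow> (nat \<times> nat \<Rightarrow> complex) measure" where
  "Gt_measure N Mt = PiM ({1..N} \<times> {1..Mt}) (\<lambda>_. cgauss)"

definition avec :: "real \<Rightarrow> real \<Rightarrow> nat \<Rightarrow> real \<Rightarrow> nat \<Rightarrow> complex" where
  "avec dh lam N \<theta> n =
     exp (\<i> * complex_of_real (pi * (2 * real n - real N - 1) * dh * sin \<theta> / lam))"

definition bvec :: "real \<Rightarrow> real \<Rightarrow> nat \<Rightarrow> real \<Rightarrow> nat \<Rightarrow> complex" where
  "bvec dh lam Mr \<theta> m =
     exp (\<i> * complex_of_real (pi * (2 * real m - real Mr - 1) * dh * sin \<theta> / lam))"

text \<open>Diagonal entries of D1 = diag(1-N,...,N-1), D2 = diag(1-Mr,...,Mr-1).\<close>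
definition dentry :: "nat \<Rightarrow> nat \<Rightarrow> real" where
  "dentry K n = 2 * real n - real K - 1"

text \<open>The objective for a given Phi = diag(exp(j phi_1),...,exp(j phi_N)).
  (G^T Phi^T a)_k = sum_n G(n,k) e^{j phi_n} a_n.\<close>
definition obj4 :: "real \<Rightarrow> real \<Rightarrow> nat \<Rightarrow> nat \<Rightarrow> nat \<Rightarrow> real \<Rightarrow>
    (nat \<times> nat \<Rightarrow> complex) \<Rightarrow> (nat \<Rightarrow> real) \<Rightarrow> real" where
  "obj4 dh lam N Mt Mr \<theta> G \<phi> =
     (\<Sum>k=1..Mt. (cmod (\<Sum>n=1..N. G (n, k) * exp (\<i> * complex_of_real (\<phi> n)) * avec dh lam N \<theta> n))\<^sup>2)
       * (\<Sum>m=1..Mr. (cmod (complex_of_real (dentry Mr m) * bvec dh lam Mr \<theta> m))\<^sup>2)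
   + (\<Sum>m=1..Mr. (cmod (bvec dh lam Mr \<theta> m))\<^sup>2)
       * (\<Sum>k=1..Mt. (cmod (\<Sum>n=1..N. G (n, k) * exp (\<i> * complex_of_real (\<phi> n))
                              * complex_of_real (dentry N n) * avec dh lam N \<theta> n))\<^sup>2)"

text \<open>gamma_4^* : the maximum over all phase vectors (attained, since the objective is
continuous and periodic in each phase; expressed as a supremum).\<close>
definition gamma4 :: "real \<Rightarrow> real \<Rightarrow> nat \<Rightarrow> nat \<Rightarrow> nat \<Rightarrow> real \<Rightarrow>
    (nat \<times> nat \<Rightarrow> complex) \<Rightarrow> real" where
  "gamma4 dh lam N Mt Mr \<theta> G = (SUP \<phi>\<in>UNIV. obj4 dh lam N Mt Mr \<theta> G \<phi>)"

end

theory Submission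
  imports Defs
begin


lemma gauss_x2_half:
  "(\<integral>\<^sup>+t. ennreal (t\<^sup>2 * exp (- t\<^sup>2)) * indicator {0..} t \<partial>lborel) = ennreal (sqrt pi / 4)"
proof -
  have h: "has_bochner_integral lborel (\<lambda>x::real. indicator {0..} x *\<^sub>R (exp (-x\<^sup>2)*x^(2 * 1)))
       ((sqrt pi / 2) * (fact (2 * 1) / (2 ^ (2 * 1) * fact 1)))"
    by (rule gaussian_moment_even_pos)
  have e: "(sqrt pi / 2) * (fact (2 * 1) / (2 ^ (2 * 1) * fact (1::nat))) = sqrt pi / 4"
    by (simp add: numeral_2_eq_2)
  have "(\<integral>\<^sup>+t. ennreal (indicator {0..} t *\<^sub>R (exp (-t\<^sup>2)*t^(2 * 1))) \<partial>lborel) = ennreal (sqrt pi / 4)"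
    using h e by (subst nn_integral_eq_integrable) (auto simp: has_bochner_integral_iff)
  then show ?thesis
    by (simp add: indicator_mult_ennreal mult.commute power2_eq_square)
qed

lemma inner_x:
  fixes s :: real
  shows "(\<integral>\<^sup>+x. ennreal (x\<^sup>2 * sqrt (1 + s\<^sup>2) * exp (- (x\<^sup>2 * (1 + s\<^sup>2)))) * indicator {0<..} x \<partial>lborel)
     = ennreal (sqrt pi / 4 / (1 + s\<^sup>2))"
proof -
  define a where "a = 1 + s\<^sup>2"
  have a: "a > 0" "a \<ge> 1" unfolding a_def by (auto intro: add_pos_nonneg)
  define c where "c = 1 / sqrt a"
  have c: "c > 0" using a by (simp add: c_def)
  have "(\<integral>\<^sup>+x. ennreal (x\<^sup>2 * sqrt a * exp (- (x\<^sup>2 * a))) * indicator {0<..} x \<partial>lborel)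
      = \<bar>c\<bar> * (\<integral>\<^sup>+t. ennreal ((0 + c * t)\<^sup>2 * sqrt a * exp (- ((0 + c * t)\<^sup>2 * a))) * indicator {0<..} (0 + c * t) \<partial>lborel)"
    by (rule nn_integral_real_affine) (use c in auto)
  also have "\<dots> = ennreal c * (\<integral>\<^sup>+t. ennreal (1 / sqrt a) * (ennreal (t\<^sup>2 * exp (- t\<^sup>2)) * indicator {0..} t) \<partial>lborel)"
  proof -
    have "ennreal ((c * t)\<^sup>2 * sqrt a * exp (- ((c * t)\<^sup>2 * a))) * indicator {0<..} (c * t)
       = ennreal (1 / sqrt a) * (ennreal (t\<^sup>2 * exp (- t\<^sup>2)) * indicator {0..} t)" for t
    proof -
      have 1: "(c * t)\<^sup>2 * a = t\<^sup>2" using a by (simp add: c_def power_mult_distrib power_divide)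
      have 3: "(c * t)\<^sup>2 * sqrt a * exp (- ((c * t)\<^sup>2 * a)) = (1/sqrt a) * (t\<^sup>2 * exp (- t\<^sup>2))"
        proof -
        have sa: "sqrt a * sqrt a = a" using a by simp
        have "sqrt a > 0" using a by simp
        then show ?thesis using sa by (simp add: 1 c_def power_mult_distrib power_divide field_simps)
      qed
      have 4: "indicator {0<..} (c * t) = (indicator {0<..} t :: ennreal)"
        using c by (simp add: indicator_def zero_less_mult_iff)
      show ?thesis using a
        apply (simp only: 3 4)
        apply (cases "t = 0")
         apply (simp)
        apply (simp add: ennreal_mult[symmetric] indicator_def)
        done
    qed
    then show ?thesis using c by simp
  qed
  also have "\<dots> = ennreal c * (ennreal (1/sqrt a) * ennreal (sqrt pi / 4))"
    by (subst nn_integral_cmult) (auto simp: gauss_x2_half)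
  also have "\<dots> = ennreal (sqrt pi / 4 / a)"
    using a c by (simp add: ennreal_mult[symmetric] c_def)
  finally show ?thesis
    unfolding a_def .
qed

lemma outer_s:
  "(\<integral>\<^sup>+s. ennreal (sqrt pi / 4 / (1 + s\<^sup>2)) * indicator {0..} s \<partial>lborel) = ennreal (pi * sqrt pi / 8)"
proof -
  have "(\<integral>\<^sup>+s. ennreal (sqrt pi / 4 / (1 + s\<^sup>2)) * indicator {0..} s \<partial>lborel)
     = ennreal (sqrt pi / 4 * (pi / 2) - sqrt pi / 4 * arctan 0)"
  proof (rule nn_integral_FTC_atLeast)
    show "((\<lambda>a. sqrt pi / 4 * arctan a) \<longlongrightarrow> sqrt pi / 4 * (pi / 2)) at_top"
      by (intro tendsto_intros) (simp_all add: tendsto_arctan_at_top)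
  qed (auto intro!: derivative_eq_intros simp: add_nonneg_eq_0_iff field_simps power2_eq_square)
  also have "\<dots> = ennreal (pi * sqrt pi / 8)" by simp
  finally show ?thesis .
qed

lemma quad:
  "(\<integral>\<^sup>+x. (\<integral>\<^sup>+y. ennreal (exp (- x\<^sup>2) * exp (- y\<^sup>2) * sqrt (x\<^sup>2 + y\<^sup>2)) * indicator {0..} y \<partial>lborel) * indicator {0..} x \<partial>lborel)
   = ennreal (pi * sqrt pi / 8)"
proof -
  let ?F = "\<lambda>x y. exp (- x\<^sup>2) * exp (- y\<^sup>2) * sqrt (x\<^sup>2 + y\<^sup>2)"
  let ?H = "\<lambda>x s. x\<^sup>2 * sqrt (1 + s\<^sup>2) * exp (- (x\<^sup>2 * (1 + s\<^sup>2)))"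
  have "(\<integral>\<^sup>+x. (\<integral>\<^sup>+y. ennreal (?F x y) * indicator {0..} y \<partial>lborel) * indicator {0..} x \<partial>lborel)
      = (\<integral>\<^sup>+x. (\<integral>\<^sup>+y. ennreal (?F x y) * indicator {0..} y \<partial>lborel) * indicator {0<..} x \<partial>lborel)"
    by (intro nn_integral_cong_AE AE_I[where N="{0}"]) (auto split: split_indicator)
  also have "\<dots> = (\<integral>\<^sup>+x. (\<integral>\<^sup>+s. ennreal (?H x s) * indicator {0..} s \<partial>lborel) * indicator {0<..} x \<partial>lborel)"
  proof (intro nn_integral_cong)
    fix x :: real
    show "(\<integral>\<^sup>+y. ennreal (?F x y) * indicator {0..} y \<partial>lborel) * indicator {0<..} x
        = (\<integral>\<^sup>+s. ennreal (?H x s) * indicator {0..} s \<partial>lborel) * indicator {0<..} x"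
    proof (cases "x > 0")
      case True
      have "(\<integral>\<^sup>+y. ennreal (?F x y) * indicator {0..} y \<partial>lborel)
          = \<bar>x\<bar> * (\<integral>\<^sup>+s. ennreal (?F x (0 + x * s)) * indicator {0..} (0 + x * s) \<partial>lborel)"
        by (rule nn_integral_real_affine) (use True in auto)
      also have "\<dots> = (\<integral>\<^sup>+s. ennreal x * (ennreal (?F x (x * s)) * indicator {0..} (x * s)) \<partial>lborel)"
        using True by (subst nn_integral_cmult) auto
      also have "\<dots> = (\<integral>\<^sup>+s. ennreal (?H x s) * indicator {0..} s \<partial>lborel)"
      proof (intro nn_integral_cong)
        fix s :: real
        have i: "indicator {0..} (x * s) = (indicator {0..} s :: ennreal)"
          using True by (simp add: indicator_def zero_le_mult_iff)
        have e: "x * ?F x (x * s) = ?H x s"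
        proof -
          have "sqrt (x\<^sup>2 + (x * s)\<^sup>2) = x * sqrt (1 + s\<^sup>2)"
            proof -
            have "x\<^sup>2 + (x * s)\<^sup>2 = x\<^sup>2 * (1 + s\<^sup>2)" by (simp add: algebra_simps power_mult_distrib)
            then show ?thesis using True by (simp add: real_sqrt_mult)
          qed
          moreover have "exp (- x\<^sup>2) * exp (- (x * s)\<^sup>2) = exp (- (x\<^sup>2 * (1 + s\<^sup>2)))"
            by (simp add: mult_exp_exp power_mult_distrib algebra_simps)
          ultimately show ?thesis by (simp add: power2_eq_square algebra_simps)
        qed
        show "ennreal x * (ennreal (?F x (x * s)) * indicator {0..} (x * s)) = ennreal (?H x s) * indicator {0..} s"
          proof -
          have "ennreal x * (ennreal (?F x (x * s)) * indicator {0..} (x * s)) = ennreal (x * ?F x (x * s)) * indicator {0..} s"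
            using True by (simp add: i ennreal_mult' mult.assoc)
          then show ?thesis by (simp only: e)
        qed
      qed
      finally show ?thesis by simp
    qed simp
  qed
  also have "\<dots> = (\<integral>\<^sup>+x. \<integral>\<^sup>+s. ennreal (?H x s) * indicator {0..} s * indicator {0<..} x \<partial>lborel \<partial>lborel)"
    by (intro nn_integral_cong) (simp add: nn_integral_multc)
  also have "\<dots> = (\<integral>\<^sup>+s. \<integral>\<^sup>+x. ennreal (?H x s) * indicator {0..} s * indicator {0<..} x \<partial>lborel \<partial>lborel)"
    by (rule lborel_pair.Fubini'[symmetric]) auto
  also have "\<dots> = (\<integral>\<^sup>+s. (\<integral>\<^sup>+x. ennreal (?H x s) * indicator {0<..} x \<partial>lborel) * indicator {0..} s \<partial>lborel)"
    by (intro nn_integral_cong, subst nn_integral_multc[symmetric]) (auto intro!: nn_integral_cong simp: mult_ac)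
  also have "\<dots> = (\<integral>\<^sup>+s. ennreal (sqrt pi / 4 / (1 + s\<^sup>2)) * indicator {0..} s \<partial>lborel)"
    by (simp add: inner_x)
  also have "\<dots> = ennreal (pi * sqrt pi / 8)" by (rule outer_s)
  finally show ?thesis .
qed



lemma even_nn:
  fixes g :: "real \<Rightarrow> ennreal"
  assumes [measurable]: "g \<in> borel_measurable borel" and ev: "\<And>x. g (- x) = g x"
  shows "(\<integral>\<^sup>+x. g x \<partial>lborel) = 2 * (\<integral>\<^sup>+x. g x * indicator {0..} x \<partial>lborel)"
proof -
  have "(\<integral>\<^sup>+x. g x \<partial>lborel) = (\<integral>\<^sup>+x. g x * indicator {0..} x + g x * indicator {..<0} x \<partial>lborel)"
    by (intro nn_integral_cong) (auto split: split_indicator)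
  also have "\<dots> = (\<integral>\<^sup>+x. g x * indicator {0..} x \<partial>lborel) + (\<integral>\<^sup>+x. g x * indicator {..<0} x \<partial>lborel)"
    by (rule nn_integral_add) auto
  also have "(\<integral>\<^sup>+x. g x * indicator {..<0} x \<partial>lborel)
      = ennreal \<bar>-1::real\<bar> * (\<integral>\<^sup>+x. g (0 + (-1) * x) * indicator {..<0} (0 + (-1) * x) \<partial>lborel)"
    by (rule nn_integral_real_affine) auto
  also have "\<dots> = (\<integral>\<^sup>+x. g x * indicator {0<..} x \<partial>lborel)"
    by (simp add: ev indicator_def)
  also have "\<dots> = (\<integral>\<^sup>+x. g x * indicator {0..} x \<partial>lborel)"
    by (intro nn_integral_cong_AE AE_I[where N="{0}"]) (auto split: split_indicator)
  finally show ?thesis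
    by (simp add: mult_2)
qed

lemma full_plane:
  "(\<integral>\<^sup>+x. \<integral>\<^sup>+y. ennreal (exp (- x\<^sup>2) * exp (- y\<^sup>2) * sqrt (x\<^sup>2 + y\<^sup>2)) \<partial>lborel \<partial>lborel)
   = ennreal (pi * sqrt pi / 2)"
proof -
  let ?F = "\<lambda>x y. exp (- x\<^sup>2) * exp (- y\<^sup>2) * sqrt (x\<^sup>2 + y\<^sup>2)"
  have "(\<integral>\<^sup>+x. \<integral>\<^sup>+y. ennreal (?F x y) \<partial>lborel \<partial>lborel)
      = (\<integral>\<^sup>+x. 2 * (\<integral>\<^sup>+y. ennreal (?F x y) * indicator {0..} y \<partial>lborel) \<partial>lborel)"
    by (intro nn_integral_cong even_nn) auto
  also have "\<dots> = 2 * (\<integral>\<^sup>+x. (2 * (\<integral>\<^sup>+y. ennreal (?F x y) * indicator {0..} y \<partial>lborel)) * indicator {0..} x \<partial>lborel)"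
    by (rule even_nn) auto
  also have "\<dots> = 2 * (2 * (\<integral>\<^sup>+x. (\<integral>\<^sup>+y. ennreal (?F x y) * indicator {0..} y \<partial>lborel) * indicator {0..} x \<partial>lborel))"
    by (subst nn_integral_cmult[symmetric]) (auto simp: mult.assoc)
  also have "\<dots> = 4 * (\<integral>\<^sup>+x. (\<integral>\<^sup>+y. ennreal (?F x y) * indicator {0..} y \<partial>lborel) * indicator {0..} x \<partial>lborel)"
    by (simp add: mult.assoc[symmetric])
  also have "\<dots> = 4 * ennreal (pi * sqrt pi / 8)"
    by (simp add: quad)
  also have "\<dots> = ennreal 4 * ennreal (pi * sqrt pi / 8)"
    by simp
  also have "\<dots> = ennreal (4 * (pi * sqrt pi / 8))"
    by (rule ennreal_mult[symmetric]) auto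
  also have "\<dots> = ennreal (pi * sqrt pi / 2)"
    by simp
  finally show ?thesis .
qed



abbreviation "ND \<equiv> density lborel (\<lambda>x. ennreal (normal_density 0 (sqrt (1/2)) x))"

lemma nd_eq: "normal_density 0 (sqrt (1/2)) x = exp (- x\<^sup>2) / sqrt pi"
  by (simp add: normal_density_def power_divide)

lemma prob_ND: "prob_space ND"
  by (rule prob_space_normal_density) simp

lemma sets_ND[measurable_cong, simp]: "sets ND = sets borel" by simp

lemma Complex_meas[measurable]: "(\<lambda>(x, y). Complex x y) \<in> borel_measurable (borel \<Otimes>\<^sub>M borel)"
  by (simp add: Complex_eq[abs_def] case_prod_beta')

lemma prob_cgauss: "prob_space cgauss"
proof -
  interpret a: prob_space ND by (rule prob_ND)
  interpret p: pair_prob_space ND ND ..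
  show ?thesis unfolding cgauss_def
    by (rule p.prob_space_distr) (simp add: measurable_cong_sets[OF sets_pair_measure_cong[OF sets_ND sets_ND]])
qed

lemma sets_cgauss[measurable_cong, simp]: "sets cgauss = sets borel"
  by (simp add: cgauss_def)

lemma nn_cgauss:
  assumes [measurable]: "f \<in> borel_measurable borel"
  shows "(\<integral>\<^sup>+z. f z \<partial>cgauss) = (\<integral>\<^sup>+x. \<integral>\<^sup>+y. f (Complex x y) \<partial>ND \<partial>ND)"
proof -
  interpret a: prob_space ND by (rule prob_ND)
  have m: "(\<lambda>(x, y). Complex x y) \<in> measurable (ND \<Otimes>\<^sub>M ND) borel"
    by (simp add: measurable_cong_sets[OF sets_pair_measure_cong[OF sets_ND sets_ND]])
  have "(\<integral>\<^sup>+z. f z \<partial>cgauss) = (\<integral>\<^sup>+p. f (case p of (x, y) \<Rightarrow> Complex x y) \<partial>(ND \<Otimes>\<^sub>M ND))"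
    unfolding cgauss_def by (rule nn_integral_distr[OF m]) simp
  also have "\<dots> = (\<integral>\<^sup>+x. \<integral>\<^sup>+y. f (Complex x y) \<partial>ND \<partial>ND)"
    by (subst a.nn_integral_fst[symmetric]) (auto simp: measurable_cong_sets[OF sets_pair_measure_cong[OF sets_ND sets_ND]])
  finally show ?thesis .
qed



lemma ND_moment2: "(\<integral>\<^sup>+y. ennreal (y\<^sup>2) \<partial>ND) = ennreal (1/2)"
proof -
  have h: "has_bochner_integral lborel (\<lambda>x. normal_density 0 (sqrt (1/2)) x * (x - 0) ^ (2 * 1))
      (fact (2 * 1) / ((2 / (sqrt (1/2))\<^sup>2)^1 * fact 1))"
    by (rule normal_moment_even) simp
  have e: "(fact (2 * 1) / ((2 / (sqrt (1/2))\<^sup>2)^1 * fact (1::nat))) = (1/2::real)"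
    by (simp add: numeral_2_eq_2)
  have "(\<integral>\<^sup>+y. ennreal (y\<^sup>2) \<partial>ND) = (\<integral>\<^sup>+y. ennreal (normal_density 0 (sqrt (1/2)) y) * ennreal (y\<^sup>2) \<partial>lborel)"
    by (subst nn_integral_density) auto
  also have "\<dots> = (\<integral>\<^sup>+y. ennreal (normal_density 0 (sqrt (1/2)) y * (y - 0) ^ (2 * 1)) \<partial>lborel)"
    by (intro nn_integral_cong) (simp add: ennreal_mult[symmetric] power2_eq_square)
  also have "\<dots> = ennreal (1/2)"
    using h e by (subst nn_integral_eq_integrable) (auto simp: has_bochner_integral_iff)
  finally show ?thesis .
qed

lemma cg_sq: "has_bochner_integral cgauss (\<lambda>z. (cmod z)\<^sup>2) 1"
proof -
  interpret a: prob_space ND by (rule prob_ND)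
  have sp: "emeasure ND UNIV = 1" using a.emeasure_space_1 by simp
  have "(\<integral>\<^sup>+z. ennreal ((cmod z)\<^sup>2) \<partial>cgauss) = (\<integral>\<^sup>+x. \<integral>\<^sup>+y. ennreal ((cmod (Complex x y))\<^sup>2) \<partial>ND \<partial>ND)"
    by (rule nn_cgauss) simp
  also have "\<dots> = (\<integral>\<^sup>+x. \<integral>\<^sup>+y. ennreal (x\<^sup>2) + ennreal (y\<^sup>2) \<partial>ND \<partial>ND)"
    by (intro nn_integral_cong) (simp add: complex_norm ennreal_plus)
  also have "\<dots> = (\<integral>\<^sup>+x. ennreal (x\<^sup>2) + ennreal (1/2) \<partial>ND)"
    by (intro nn_integral_cong) (simp add: nn_integral_add ND_moment2 sp)
  also have "\<dots> = ennreal (1/2) + ennreal (1/2)"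
    by (simp add: nn_integral_add ND_moment2 sp)
  also have "\<dots> = ennreal 1"
    by (subst ennreal_plus[symmetric]) auto
  finally show ?thesis
    by (intro has_bochner_integral_nn_integral) auto
qed

lemma cg_abs: "has_bochner_integral cgauss cmod (sqrt pi / 2)"
proof -
  let ?nd = "normal_density 0 (sqrt (1/2))"
  have "(\<integral>\<^sup>+z. ennreal (cmod z) \<partial>cgauss) = (\<integral>\<^sup>+x. \<integral>\<^sup>+y. ennreal (cmod (Complex x y)) \<partial>ND \<partial>ND)"
    by (rule nn_cgauss) simp
  also have "\<dots> = (\<integral>\<^sup>+x. ennreal (?nd x) * (\<integral>\<^sup>+y. ennreal (?nd y) * ennreal (sqrt (x\<^sup>2 + y\<^sup>2)) \<partial>lborel) \<partial>lborel)"
    by (subst nn_integral_density) (auto simp: complex_norm nn_integral_density)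
  also have "\<dots> = (\<integral>\<^sup>+x. \<integral>\<^sup>+y. ennreal (exp (- x\<^sup>2) * exp (- y\<^sup>2) * sqrt (x\<^sup>2 + y\<^sup>2)) * ennreal (1 / pi) \<partial>lborel \<partial>lborel)"
  proof (intro nn_integral_cong)
    fix x
    have "ennreal (?nd x) * (\<integral>\<^sup>+y. ennreal (?nd y) * ennreal (sqrt (x\<^sup>2 + y\<^sup>2)) \<partial>lborel)
       = (\<integral>\<^sup>+y. ennreal (?nd x) * (ennreal (?nd y) * ennreal (sqrt (x\<^sup>2 + y\<^sup>2))) \<partial>lborel)"
      by (rule nn_integral_cmult[symmetric]) auto
    also have "\<dots> = (\<integral>\<^sup>+y. ennreal (exp (- x\<^sup>2) * exp (- y\<^sup>2) * sqrt (x\<^sup>2 + y\<^sup>2)) * ennreal (1 / pi) \<partial>lborel)"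
    proof (intro nn_integral_cong)
      fix y
      have "?nd x * (?nd y * sqrt (x\<^sup>2 + y\<^sup>2)) = exp (- x\<^sup>2) * exp (- y\<^sup>2) * sqrt (x\<^sup>2 + y\<^sup>2) * (1 / pi)"
        by (simp add: nd_eq field_simps)
      then show "ennreal (?nd x) * (ennreal (?nd y) * ennreal (sqrt (x\<^sup>2 + y\<^sup>2)))
          = ennreal (exp (- x\<^sup>2) * exp (- y\<^sup>2) * sqrt (x\<^sup>2 + y\<^sup>2)) * ennreal (1 / pi)"
        by (simp add: ennreal_mult[symmetric])
    qed
    finally show "ennreal (?nd x) * (\<integral>\<^sup>+y. ennreal (?nd y) * ennreal (sqrt (x\<^sup>2 + y\<^sup>2)) \<partial>lborel)
       = (\<integral>\<^sup>+y. ennreal (exp (- x\<^sup>2) * exp (- y\<^sup>2) * sqrt (x\<^sup>2 + y\<^sup>2)) * ennreal (1 / pi) \<partial>lborel)" .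
  qed
  also have "\<dots> = (\<integral>\<^sup>+x. \<integral>\<^sup>+y. ennreal (exp (- x\<^sup>2) * exp (- y\<^sup>2) * sqrt (x\<^sup>2 + y\<^sup>2)) \<partial>lborel \<partial>lborel) * ennreal (1 / pi)"
    by (subst nn_integral_multc[symmetric]) (auto intro!: nn_integral_cong nn_integral_multc)
  also have "\<dots> = ennreal (pi * sqrt pi / 2) * ennreal (1 / pi)"
    by (simp add: full_plane)
  also have "\<dots> = ennreal (sqrt pi / 2)"
    by (simp add: ennreal_mult[symmetric])
  finally show ?thesis
    by (intro has_bochner_integral_nn_integral) auto
qed



lemma ND_uminus: "distr ND borel uminus = ND"
proof -
  have "density (distr lborel borel uminus) (\<lambda>x. ennreal (normal_density 0 (sqrt (1/2)) x))
      = distr (density lborel (\<lambda>x. ennreal (normal_density 0 (sqrt (1/2)) (- x)))) borel uminus"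
    by (rule density_distr) auto
  moreover have "(\<lambda>x. ennreal (normal_density 0 (sqrt (1/2)) (- x))) = (\<lambda>x. ennreal (normal_density 0 (sqrt (1/2)) x))"
    by (simp add: normal_density_def)
  ultimately have "density lborel (\<lambda>x. ennreal (normal_density 0 (sqrt (1/2)) x)) = distr ND borel uminus"
    by (simp add: lborel_distr_uminus)
  then show ?thesis
    by (metis distr_cong sets_lborel)
qed

lemma cg_uminus: "distr cgauss borel uminus = cgauss"
proof -
  interpret a: prob_space ND by (rule prob_ND)
  have mC: "(\<lambda>(x, y). Complex x y) \<in> measurable (ND \<Otimes>\<^sub>M ND) borel"
    by (simp add: measurable_cong_sets[OF sets_pair_measure_cong[OF sets_ND sets_ND]])
  have mN: "(\<lambda>(x::real, y::real). (- x, - y)) \<in> measurable (ND \<Otimes>\<^sub>M ND) (borel \<Otimes>\<^sub>M borel)"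
    by (simp add: measurable_cong_sets[OF sets_pair_measure_cong[OF sets_ND sets_ND]])
  have mC': "(\<lambda>(x, y). Complex x y) \<in> measurable (borel \<Otimes>\<^sub>M borel) borel"
    by simp
  have "distr cgauss borel uminus = distr (ND \<Otimes>\<^sub>M ND) borel (\<lambda>p. - (case p of (x, y) \<Rightarrow> Complex x y))"
    unfolding cgauss_def by (subst distr_distr) (auto simp: mC comp_def)
  also have "\<dots> = distr (ND \<Otimes>\<^sub>M ND) borel ((\<lambda>(x, y). Complex x y) \<circ> (\<lambda>(x, y). (- x, - y)))"
    by (intro distr_cong) (auto simp: complex_eq_iff)
  also have "\<dots> = distr (distr (ND \<Otimes>\<^sub>M ND) (borel \<Otimes>\<^sub>M borel) (\<lambda>(x, y). (- x, - y))) borel (\<lambda>(x, y). Complex x y)"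
    by (rule distr_distr[symmetric, OF mC' mN])
  also have "distr (ND \<Otimes>\<^sub>M ND) (borel \<Otimes>\<^sub>M borel) (\<lambda>(x, y). (- x, - y)) = distr ND borel uminus \<Otimes>\<^sub>M distr ND borel uminus"
    by (rule pair_measure_distr[symmetric]) (auto simp: ND_uminus prob_ND intro: prob_space_imp_sigma_finite)
  also have "\<dots> = ND \<Otimes>\<^sub>M ND" by (simp add: ND_uminus)
  finally show ?thesis unfolding cgauss_def .
qed



lemma space_cgauss[simp]: "space cgauss = UNIV"
  by (simp add: cgauss_def)

lemma cgM: "measurable M cgauss = borel_measurable M"
  by (rule measurable_cong_sets) auto

lemma PiM_flip:
  fixes I :: "'i set"
  assumes I: "finite I" and j: "j \<in> I"
  shows "distr (PiM I (\<lambda>_. cgauss)) (PiM I (\<lambda>_. cgauss)) (\<lambda>G. \<lambda>i\<in>I. if i = j then - G i else G i) = PiM I (\<lambda>_. cgauss)"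
    (is "distr ?M ?M ?T = ?M")
proof -
  interpret cg: prob_space cgauss by (rule prob_cgauss)
  interpret P: product_prob_space "\<lambda>_::'i. cgauss" by (intro product_prob_spaceI) (rule prob_cgauss)
  have mT: "?T \<in> measurable ?M ?M"
  proof (rule measurable_restrict)
    fix i assume "i \<in> I"
    have "(\<lambda>G. G i) \<in> measurable ?M cgauss" using \<open>i \<in> I\<close> by (rule measurable_component_singleton)
    then have m[measurable]: "(\<lambda>G. G i) \<in> borel_measurable ?M" by (simp add: cgM)
    show "(\<lambda>G. if i = j then - G i else G i) \<in> measurable ?M cgauss"
      unfolding cgM by measurable
  qed
  show ?thesis
  proof (rule P.PiM_eqI[OF I])
    show "sets (distr ?M ?M ?T) = sets ?M" by simp
    fix A assume A: "\<And>i. i \<in> I \<Longrightarrow> A i \<in> sets cgauss"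
    have "emeasure (distr ?M ?M ?T) (Pi\<^sub>E I A) = emeasure ?M (?T -` Pi\<^sub>E I A \<inter> space ?M)"
      using A by (intro emeasure_distr mT sets_PiM_I_finite I) auto
    also have "?T -` Pi\<^sub>E I A \<inter> space ?M = Pi\<^sub>E I (\<lambda>i. if i = j then uminus -` A i else A i)"
      by (auto simp: space_PiM PiE_def Pi_def extensional_def split: if_splits)
    also have "emeasure ?M (Pi\<^sub>E I (\<lambda>i. if i = j then uminus -` A i else A i))
        = (\<Prod>i\<in>I. emeasure cgauss (if i = j then uminus -` A i else A i))"
    proof (rule P.emeasure_PiM[OF I])
      fix i assume "i \<in> I"
      have "uminus -` A i \<inter> space cgauss \<in> sets cgauss"
        using A[OF \<open>i \<in> I\<close>] by (intro measurable_sets[where A=cgauss]) (auto simp: cgM)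
      then show "(if i = j then uminus -` A i else A i) \<in> sets cgauss"
        using A[OF \<open>i \<in> I\<close>] by auto
    qed
    also have "\<dots> = (\<Prod>i\<in>I. emeasure cgauss (A i))"
    proof (rule prod.cong[OF refl])
      fix i assume "i \<in> I"
      have "emeasure cgauss (uminus -` A i) = emeasure (distr cgauss borel uminus) (A i)"
        using A[OF \<open>i \<in> I\<close>] by (subst emeasure_distr) auto
      then show "emeasure cgauss (if i = j then uminus -` A i else A i) = emeasure cgauss (A i)"
        by (cases "i = j") (simp_all add: cg_uminus)
    qed
    finally show "emeasure (distr ?M ?M ?T) (Pi\<^sub>E I A) = (\<Prod>i\<in>I. emeasure cgauss (A i))" .
  qed
qed

lemma integral_PiM_flip:
  fixes I :: "'i set" and f :: "('i \<Rightarrow> complex) \<Rightarrow> real"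
  assumes I: "finite I" and j: "j \<in> I" and f[measurable]: "f \<in> borel_measurable (PiM I (\<lambda>_. cgauss))"
  shows "(\<integral>G. f G \<partial>PiM I (\<lambda>_. cgauss)) = (\<integral>G. f (\<lambda>i\<in>I. if i = j then - G i else G i) \<partial>PiM I (\<lambda>_. cgauss))"
proof -
  let ?M = "PiM I (\<lambda>_. cgauss)" let ?T = "\<lambda>G. \<lambda>i\<in>I. if i = j then - G i else G i"
  have mT: "?T \<in> measurable ?M ?M"
  proof (rule measurable_restrict)
    fix i assume "i \<in> I"
    have "(\<lambda>G. G i) \<in> measurable ?M cgauss" using \<open>i \<in> I\<close> by (rule measurable_component_singleton)
    then have m[measurable]: "(\<lambda>G. G i) \<in> borel_measurable ?M" by (simp add: cgM)
    show "(\<lambda>G. if i = j then - G i else G i) \<in> measurable ?M cgauss"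
      unfolding cgM by measurable
  qed
  have "(\<integral>G. f G \<partial>?M) = (\<integral>G. f G \<partial>distr ?M ?M ?T)"
    by (simp add: PiM_flip[OF I j])
  also have "\<dots> = (\<integral>G. f (?T G) \<partial>?M)"
    by (rule integral_distr[OF mT f])
  finally show ?thesis .
qed

lemma integral_PiM_comp:
  fixes I :: "'i set" and g :: "complex \<Rightarrow> real"
  assumes i: "i \<in> I" and [measurable]: "g \<in> borel_measurable borel"
  shows "(\<integral>G. g (G i) \<partial>PiM I (\<lambda>_. cgauss)) = (\<integral>z. g z \<partial>cgauss)"
proof -
  have "distr (PiM I (\<lambda>_. cgauss)) cgauss (\<lambda>G. G i) = cgauss"
    by (rule distr_PiM_component[OF prob_cgauss i])
  moreover have "(\<integral>z. g z \<partial>distr (PiM I (\<lambda>_. cgauss)) cgauss (\<lambda>G. G i)) = (\<integral>G. g (G i) \<partial>PiM I (\<lambda>_. cgauss))"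
    by (rule integral_distr) (auto intro: measurable_component_singleton[OF i])
  ultimately show ?thesis by simp
qed

lemma integrable_PiM_comp:
  fixes I :: "'i set" and g :: "complex \<Rightarrow> real"
  assumes i: "i \<in> I" and [measurable]: "g \<in> borel_measurable borel" and int: "integrable cgauss g"
  shows "integrable (PiM I (\<lambda>_. cgauss)) (\<lambda>G. g (G i))"
proof -
  have "distr (PiM I (\<lambda>_. cgauss)) cgauss (\<lambda>G. G i) = cgauss"
    by (rule distr_PiM_component[OF prob_cgauss i])
  with int have "integrable (distr (PiM I (\<lambda>_. cgauss)) cgauss (\<lambda>G. G i)) g" by simp
  then show ?thesis
    by (subst (asm) integrable_distr_eq) (auto intro: measurable_component_singleton[OF i])
qed



lemma comp_meas[measurable]: "(\<lambda>G. G i) \<in> borel_measurable (PiM I (\<lambda>_. cgauss))"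
proof (cases "i \<in> I")
  case True
  have "(\<lambda>G. G i) \<in> measurable (PiM I (\<lambda>_. cgauss)) cgauss"
    using True by (rule measurable_component_singleton)
  then show ?thesis by (simp add: cgM)
next
  case False
  have "(\<lambda>G. undefined::complex) \<in> borel_measurable (PiM I (\<lambda>_. cgauss))" by simp
  then show ?thesis
    by (rule measurable_cong[THEN iffD1, rotated]) (use False in \<open>auto simp: space_PiM PiE_def extensional_def\<close>)
qed

lemma cnj_meas[measurable (raw)]: "f \<in> borel_measurable M \<Longrightarrow> (\<lambda>x. cnj (f x)) \<in> borel_measurable M"
proof -
  assume f: "f \<in> borel_measurable M"
  have "cnj \<in> borel_measurable borel"
    by (intro borel_measurable_continuous_onI continuous_intros)
  from measurable_compose[OF f this] show ?thesis by (simp add: comp_def)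
qed

definition uu :: "complex \<Rightarrow> complex" where
  "uu z = (if z = 0 then 1 else cnj z / complex_of_real (cmod z))"

lemma uu_meas[measurable]: "uu \<in> borel_measurable borel"
  unfolding uu_def[abs_def] by measurable

lemma cmod_uu[simp]: "cmod (uu z) = 1"
  by (simp add: uu_def norm_divide)

lemma z_uu: "z * uu z = complex_of_real (cmod z)"
proof (cases "z = 0")
  case False
  have e: "z * cnj z = (complex_of_real (cmod z))\<^sup>2" by (simp only: complex_norm_square[symmetric] of_real_power)
  have "z * uu z = (z * cnj z) / complex_of_real (cmod z)" using False by (simp add: uu_def)
  also have "\<dots> = complex_of_real (cmod z)" using False by (simp only: e) (simp add: power2_eq_square)
  finally show ?thesis .
qed (simp add: uu_def)

lemma exp_Arg_uu: "exp (\<i> * complex_of_real (- Arg z)) = uu z"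
proof (cases "z = 0")
  case True then show ?thesis by (simp add: uu_def Arg_zero)
next
  case False
  have "exp (\<i> * complex_of_real (- Arg z)) = cis (- Arg z)" by (simp add: cis_conv_exp)
  also have "\<dots> = cnj (cis (Arg z))" by (simp add: cis_cnj)
  also have "\<dots> = cnj (sgn z)" using False by (simp add: cis_Arg)
  also have "\<dots> = uu z" using False by (simp add: uu_def sgn_div_norm complex_cnj_divide scaleR_conv_of_real divide_inverse mult.commute)
  finally show ?thesis .
qed



abbreviation MM :: "nat \<Rightarrow> nat \<Rightarrow> (nat \<times> nat \<Rightarrow> complex) measure" where
  "MM N Mt \<equiv> PiM ({1..N} \<times> {1..Mt}) (\<lambda>_. cgauss)"

lemma prob_MM: "prob_space (MM N Mt)"
  by (intro prob_space_PiM prob_cgauss)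

lemma cmod_sq_Re: "(cmod z)\<^sup>2 = Re (z * cnj z)"
  by (metis Re_complex_of_real complex_norm_square)

lemma cmod_sum_sq:
  fixes x :: "nat \<Rightarrow> complex"
  shows "(cmod (\<Sum>n\<in>S. x n))\<^sup>2 = (\<Sum>n\<in>S. \<Sum>m\<in>S. Re (x n * cnj (x m)))"
  by (simp add: cmod_sq_Re cnj_sum sum_product Re_sum)

lemma sq_int_MM:
  assumes "i \<in> {1..N} \<times> {1..Mt}"
  shows "integrable (MM N Mt) (\<lambda>G. (cmod (G i))\<^sup>2)"
    and "(\<integral>G. (cmod (G i))\<^sup>2 \<partial>MM N Mt) = 1"
proof -
  show "integrable (MM N Mt) (\<lambda>G. (cmod (G i))\<^sup>2)"
    using cg_sq by (intro integrable_PiM_comp[OF assms]) (auto simp: has_bochner_integral_iff)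
  show "(\<integral>G. (cmod (G i))\<^sup>2 \<partial>MM N Mt) = 1"
    using cg_sq by (subst integral_PiM_comp[OF assms]) (auto simp: has_bochner_integral_iff)
qed

lemma abs_int_MM:
  assumes "i \<in> {1..N} \<times> {1..Mt}"
  shows "integrable (MM N Mt) (\<lambda>G. cmod (G i))"
    and "(\<integral>G. cmod (G i) \<partial>MM N Mt) = sqrt pi / 2"
proof -
  show "integrable (MM N Mt) (\<lambda>G. cmod (G i))"
    using cg_abs by (intro integrable_PiM_comp[OF assms]) (auto simp: has_bochner_integral_iff)
  show "(\<integral>G. cmod (G i) \<partial>MM N Mt) = sqrt pi / 2"
    using cg_abs by (subst integral_PiM_comp[OF assms]) (auto simp: has_bochner_integral_iff)
qed

lemma colk:
  fixes w :: "(nat \<times> nat \<Rightarrow> complex) \<Rightarrow> nat \<Rightarrow> complex" and r :: "nat \<Rightarrow> real"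
  assumes k: "2 \<le> k" "k \<le> Mt"
  and wm[measurable]: "\<And>n. (\<lambda>G. w G n) \<in> borel_measurable (MM N Mt)"
  and wr: "\<And>G n. cmod (w G n) = r n"
  and wdep: "\<And>G G' n. n \<in> {1..N} \<Longrightarrow> (\<And>n'. n' \<in> {1..N} \<Longrightarrow> G' (n', 1) = G (n', 1)) \<Longrightarrow> w G' n = w G n"
  shows "integrable (MM N Mt) (\<lambda>G. (cmod (\<Sum>n=1..N. G (n, k) * w G n))\<^sup>2)"
    and "(\<integral>G. (cmod (\<Sum>n=1..N. G (n, k) * w G n))\<^sup>2 \<partial>MM N Mt) = (\<Sum>n=1..N. (r n)\<^sup>2)"
proof -
  interpret P: prob_space "MM N Mt" by (rule prob_MM)
  let ?I = "{1..N} \<times> {1..Mt}"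
  define f where "f n m G = Re (G (n, k) * w G n * cnj (G (m, k) * w G m))" for n m G
  have fm[measurable]: "(\<lambda>G. f n m G) \<in> borel_measurable (MM N Mt)" for n m
    unfolding f_def by measurable
  have r0: "0 \<le> r n" for n using wr[of undefined n] by (metis norm_ge_zero)
  have eq: "(cmod (\<Sum>n=1..N. G (n, k) * w G n))\<^sup>2 = (\<Sum>n=1..N. \<Sum>m=1..N. f n m G)" for G
    unfolding f_def by (rule cmod_sum_sq)
  have fint: "integrable (MM N Mt) (f n m)" if nm: "n \<in> {1..N}" "m \<in> {1..N}" for n m
  proof (rule Bochner_Integration.integrable_bound)
    have i1: "(n, k) \<in> ?I" "(m, k) \<in> ?I" using nm k by auto
    show "integrable (MM N Mt) (\<lambda>G. r n * r m * ((cmod (G (n, k)))\<^sup>2 + (cmod (G (m, k)))\<^sup>2))"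
      using sq_int_MM(1)[OF i1(1)] sq_int_MM(1)[OF i1(2)] by (intro integrable_mult_right Bochner_Integration.integrable_add)
    show "f n m \<in> borel_measurable (MM N Mt)" by measurable
    show "AE G in MM N Mt. norm (f n m G) \<le> norm (r n * r m * ((cmod (G (n, k)))\<^sup>2 + (cmod (G (m, k)))\<^sup>2))"
    proof (intro AE_I2)
      fix G :: "nat \<times> nat \<Rightarrow> complex"
      let ?a = "cmod (G (n, k))" and ?b = "cmod (G (m, k))"
      have "norm (f n m G) \<le> cmod (G (n, k) * w G n * cnj (G (m, k) * w G m))"
        unfolding f_def real_norm_def by (rule abs_Re_le_cmod)
      also have "\<dots> = r n * r m * (?a * ?b)" by (simp add: norm_mult wr)
      also have "\<dots> \<le> r n * r m * (?a\<^sup>2 + ?b\<^sup>2)"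
      proof (rule mult_left_mono)
        have "0 \<le> (?a - ?b)\<^sup>2" by simp
        then show "?a * ?b \<le> ?a\<^sup>2 + ?b\<^sup>2" by (simp add: power2_eq_square algebra_simps)
           (smt (verit) mult_nonneg_nonneg norm_ge_zero)
      qed (simp add: r0)
      also have "\<dots> = norm (r n * r m * (?a\<^sup>2 + ?b\<^sup>2))" using r0[of n] r0[of m] by simp
      finally show "norm (f n m G) \<le> norm (r n * r m * (?a\<^sup>2 + ?b\<^sup>2))" .
    qed
  qed
  have fval: "(\<integral>G. f n m G \<partial>MM N Mt) = (if n = m then (r n)\<^sup>2 else 0)" if nm: "n \<in> {1..N}" "m \<in> {1..N}" for n m
  proof (cases "n = m")
    case True
    have i1: "(n, k) \<in> ?I" using nm k by auto
    have "f n m G = (r n)\<^sup>2 * (cmod (G (n, k)))\<^sup>2" for G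
      unfolding f_def True by (simp only: cmod_sq_Re[symmetric]) (simp add: norm_mult wr power_mult_distrib)
    then have "(\<integral>G. f n m G \<partial>MM N Mt) = (r n)\<^sup>2 * (\<integral>G. (cmod (G (n, k)))\<^sup>2 \<partial>MM N Mt)"
      by simp
    then show ?thesis using True sq_int_MM(2)[OF i1] by simp
  next
    case False
    have j: "(n, k) \<in> ?I" using nm k by auto
    let ?T = "\<lambda>G. \<lambda>i\<in>?I. if i = (n, k) then - G i else G i"
    have "(\<integral>G. f n m G \<partial>MM N Mt) = (\<integral>G. f n m (?T G) \<partial>MM N Mt)"
      by (rule integral_PiM_flip[OF _ j fm]) simp
    also have "\<dots> = (\<integral>G. - f n m G \<partial>MM N Mt)"
    proof (rule Bochner_Integration.integral_cong[OF refl])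
      fix G assume "G \<in> space (MM N Mt)"
      have wn: "w (?T G) n' = w G n'" if "n' \<in> {1..N}" for n'
        by (rule wdep[OF that]) (use k in auto)
      have "?T G (n, k) = - G (n, k)" using j by simp
      moreover have "?T G (m, k) = G (m, k)" using False nm k by auto
      ultimately show "f n m (?T G) = - f n m G"
        unfolding f_def using wn[OF nm(1)] wn[OF nm(2)] by simp
    qed
    also have "\<dots> = - (\<integral>G. f n m G \<partial>MM N Mt)" by simp
    finally show ?thesis using False by simp
  qed
  show "integrable (MM N Mt) (\<lambda>G. (cmod (\<Sum>n=1..N. G (n, k) * w G n))\<^sup>2)"
    unfolding eq using fint by (intro Bochner_Integration.integrable_sum) auto
  have "(\<integral>G. (cmod (\<Sum>n=1..N. G (n, k) * w G n))\<^sup>2 \<partial>MM N Mt) = (\<Sum>n=1..N. \<Sum>m=1..N. (\<integral>G. f n m G \<partial>MM N Mt))"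
    unfolding eq using fint
    by (subst Bochner_Integration.integral_sum) (auto intro!: sum.cong Bochner_Integration.integral_sum Bochner_Integration.integrable_sum)
  also have "\<dots> = (\<Sum>n=1..N. \<Sum>m=1..N. (if n = m then (r n)\<^sup>2 else 0))"
    by (intro sum.cong refl fval) auto
  also have "\<dots> = (\<Sum>n=1..N. (r n)\<^sup>2)"
    by (simp add: sum.delta)
  finally show "(\<integral>G. (cmod (\<Sum>n=1..N. G (n, k) * w G n))\<^sup>2 \<partial>MM N Mt) = (\<Sum>n=1..N. (r n)\<^sup>2)" .
qed



lemma col1:
  fixes c :: "nat \<Rightarrow> real"
  assumes Mt: "1 \<le> Mt" and c0: "\<And>n. 0 \<le> c n"
  shows "integrable (MM N Mt) (\<lambda>G. (\<Sum>n=1..N. cmod (G (n, 1)) * c n)\<^sup>2)"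
    and "(sqrt pi / 2 * (\<Sum>n=1..N. c n))\<^sup>2 \<le> (\<integral>G. (\<Sum>n=1..N. cmod (G (n, 1)) * c n)\<^sup>2 \<partial>MM N Mt)"
proof -
  interpret P: prob_space "MM N Mt" by (rule prob_MM)
  let ?X = "\<lambda>G. \<Sum>n=1..N. cmod (G (n, 1)) * c n"
  have mem: "(n, 1) \<in> {1..N} \<times> {1..Mt}" if "n \<in> {1..N}" for n using that Mt by auto
  have Xi: "integrable (MM N Mt) ?X"
    using abs_int_MM(1)[OF mem] by (intro Bochner_Integration.integrable_sum integrable_mult_left) auto
  have EX: "(\<integral>G. ?X G \<partial>MM N Mt) = sqrt pi / 2 * (\<Sum>n=1..N. c n)"
    using abs_int_MM[OF mem]
    by (subst Bochner_Integration.integral_sum) (auto simp: sum_distrib_left mult.commute intro!: sum.cong)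
  show X2i: "integrable (MM N Mt) (\<lambda>G. (?X G)\<^sup>2)"
  proof (rule Bochner_Integration.integrable_bound)
    show "integrable (MM N Mt) (\<lambda>G. (\<Sum>n=1..N. (c n)\<^sup>2) * (\<Sum>n=1..N. (cmod (G (n, 1)))\<^sup>2))"
      using sq_int_MM(1)[OF mem] by (intro integrable_mult_right Bochner_Integration.integrable_sum) auto
    show "(\<lambda>G. (?X G)\<^sup>2) \<in> borel_measurable (MM N Mt)" by measurable
    show "AE G in MM N Mt. norm ((?X G)\<^sup>2) \<le> norm ((\<Sum>n=1..N. (c n)\<^sup>2) * (\<Sum>n=1..N. (cmod (G (n, 1)))\<^sup>2))"
    proof (intro AE_I2)
      fix G :: "nat \<times> nat \<Rightarrow> complex"
      have "(?X G)\<^sup>2 \<le> (\<Sum>n=1..N. (cmod (G (n, 1)))\<^sup>2) * (\<Sum>n=1..N. (c n)\<^sup>2)"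
        by (rule Cauchy_Schwarz_ineq_sum)
      moreover have "0 \<le> (\<Sum>n=1..N. (c n)\<^sup>2) * (\<Sum>n=1..N. (cmod (G (n, 1)))\<^sup>2)"
        by (intro mult_nonneg_nonneg sum_nonneg) auto
      ultimately show "norm ((?X G)\<^sup>2) \<le> norm ((\<Sum>n=1..N. (c n)\<^sup>2) * (\<Sum>n=1..N. (cmod (G (n, 1)))\<^sup>2))"
        by (simp add: mult.commute)
    qed
  qed
  have "P.variance ?X = (\<integral>G. (?X G)\<^sup>2 \<partial>MM N Mt) - (\<integral>G. ?X G \<partial>MM N Mt)\<^sup>2"
    by (rule P.variance_eq[OF Xi X2i])
  moreover have "0 \<le> P.variance ?X" by (rule integral_nonneg_AE) auto
  ultimately have "(\<integral>G. ?X G \<partial>MM N Mt)\<^sup>2 \<le> (\<integral>G. (?X G)\<^sup>2 \<partial>MM N Mt)"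
    by linarith
  then show "(sqrt pi / 2 * (\<Sum>n=1..N. c n))\<^sup>2 \<le> (\<integral>G. (?X G)\<^sup>2 \<partial>MM N Mt)"
    unfolding EX .
qed



lemma sum_id_real: "(\<Sum>m=1..K. real m) = real K * (real K + 1) / 2"
  by (induction K) (auto simp: field_simps)

lemma sum_sq_real: "(\<Sum>m=1..K. (real m)\<^sup>2) = real K * (real K + 1) * (2 * real K + 1) / 6"
  by (induction K) (auto simp: field_simps power2_eq_square)

lemma sum_sq_gen: "(\<Sum>m=1..K. (2 * real m - c)\<^sup>2) = 2 * real K * (real K + 1) * (2 * real K + 1) / 3 - 2 * c * real K * (real K + 1) + real K * c\<^sup>2"
  by (induction K) (auto simp: field_simps power2_eq_square)

lemma sum_lin_gen: "(\<Sum>n=1..p. a - 2 * real n) = real p * a - real p * (real p + 1)"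
  by (induction p) (auto simp: field_simps)

lemma sum_odd_gen: "(\<Sum>n=1..p. 2 * real n - 1) = (real p)\<^sup>2"
  by (induction p) (auto simp: field_simps power2_eq_square)

lemma sum_dentry_sq: "(\<Sum>m=1..K. (dentry K m)\<^sup>2) = real K * ((real K)\<^sup>2 - 1) / 3"
proof -
  have "(\<Sum>m=1..K. (dentry K m)\<^sup>2) = (\<Sum>m=1..K. (2 * real m - (real K + 1))\<^sup>2)"
    by (intro sum.cong refl) (simp add: dentry_def algebra_simps)
  also have "\<dots> = real K * ((real K)\<^sup>2 - 1) / 3"
    unfolding sum_sq_gen by (simp add: field_simps power2_eq_square power3_eq_cube)
  finally show ?thesis .
qed

lemma sum_abs_dentry:
  assumes "even N"
  shows "(\<Sum>n=1..N. \<bar>dentry N n\<bar>) = (real N)\<^sup>2 / 2"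
proof -
  obtain p where p: "N = p + p" using assms by (metis evenE mult_2)
  have "(\<Sum>n=1..N. \<bar>dentry N n\<bar>) = (\<Sum>n=1..p. \<bar>dentry N n\<bar>) + (\<Sum>n=p+1..p+p. \<bar>dentry N n\<bar>)"
    unfolding p by (rule sum.ub_add_nat) simp
  also have "(\<Sum>n=1..p. \<bar>dentry N n\<bar>) = (\<Sum>n=1..p. (2 * real p + 1) - 2 * real n)"
    by (intro sum.cong refl) (auto simp: dentry_def p)
  also have "\<dots> = real p * (2 * real p + 1) - real p * (real p + 1)"
    by (rule sum_lin_gen)
  also have "(\<Sum>n=p+1..p+p. \<bar>dentry N n\<bar>) = (\<Sum>j=1..p. \<bar>dentry N (j + p)\<bar>)"
    using sum.shift_bounds_cl_nat_ivl[of "\<lambda>n. \<bar>dentry N n\<bar>" 1 p p] by (simp add: add.commute)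
  also have "\<dots> = (\<Sum>j=1..p. 2 * real j - 1)"
    by (intro sum.cong refl) (auto simp: dentry_def p)
  also have "\<dots> = (real p)\<^sup>2"
    by (rule sum_odd_gen)
  finally show ?thesis
    by (simp add: p field_simps power2_eq_square)
qed



definition Phi :: "(nat \<Rightarrow> real) set" where
  "Phi = range (\<lambda>(j::nat, ks::int list). \<lambda>n. if n < length ks then real_of_int (ks ! n) / real (Suc j) else 0)"

lemma countable_Phi: "countable Phi"
  unfolding Phi_def by simp

lemma floor_approx: "(\<lambda>j. real_of_int \<lfloor>x * real (Suc j)\<rfloor> / real (Suc j)) \<longlonglongrightarrow> x"
proof (rule tendsto_sandwich[where f="\<lambda>j. x - inverse (real (Suc j))" and h="\<lambda>j. x"])
  show "\<forall>\<^sub>F j in sequentially. x - inverse (real (Suc j)) \<le> real_of_int \<lfloor>x * real (Suc j)\<rfloor> / real (Suc j)"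
  proof (intro always_eventually allI)
    fix j
    have "x * real (Suc j) - 1 \<le> real_of_int \<lfloor>x * real (Suc j)\<rfloor>" by linarith
    then have "(x * real (Suc j) - 1) / real (Suc j) \<le> real_of_int \<lfloor>x * real (Suc j)\<rfloor> / real (Suc j)"
      by (rule divide_right_mono) simp
    moreover have "(x * real (Suc j) - 1) / real (Suc j) = x - inverse (real (Suc j))"
      by (simp add: field_simps del: of_nat_Suc)
    ultimately show "x - inverse (real (Suc j)) \<le> real_of_int \<lfloor>x * real (Suc j)\<rfloor> / real (Suc j)"
      by simp
  qed
  show "\<forall>\<^sub>F j in sequentially. real_of_int \<lfloor>x * real (Suc j)\<rfloor> / real (Suc j) \<le> x"
  proof (intro always_eventually allI)
    fix j
    have "real_of_int \<lfloor>x * real (Suc j)\<rfloor> \<le> x * real (Suc j)" by linarith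
    then have "real_of_int \<lfloor>x * real (Suc j)\<rfloor> / real (Suc j) \<le> x * real (Suc j) / real (Suc j)"
      by (rule divide_right_mono) simp
    then show "real_of_int \<lfloor>x * real (Suc j)\<rfloor> / real (Suc j) \<le> x"
      by (simp del: of_nat_Suc)
  qed
  show "(\<lambda>j. x - inverse (real (Suc j))) \<longlonglongrightarrow> x"
    using tendsto_diff[OF tendsto_const LIMSEQ_inverse_real_of_nat, of x] by simp
qed simp

lemma ap_in_Phi:
  "(\<lambda>n. if n < Suc N then real_of_int \<lfloor>\<phi> n * real (Suc j)\<rfloor> / real (Suc j) else 0) \<in> Phi"
proof -
  let ?F = "\<lambda>(j::nat, ks::int list). \<lambda>n. if n < length ks then real_of_int (ks ! n) / real (Suc j) else 0"
  have eq: "(\<lambda>n. if n < Suc N then real_of_int \<lfloor>\<phi> n * real (Suc j)\<rfloor> / real (Suc j) else 0)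
      = ?F (j, map (\<lambda>n. \<lfloor>\<phi> n * real (Suc j)\<rfloor>) [0..<Suc N])"
  proof
    fix n
    show "(if n < Suc N then real_of_int \<lfloor>\<phi> n * real (Suc j)\<rfloor> / real (Suc j) else 0)
      = ?F (j, map (\<lambda>n. \<lfloor>\<phi> n * real (Suc j)\<rfloor>) [0..<Suc N]) n"
      by (cases "n < Suc N") (simp_all del: upt_Suc)
  qed
  show ?thesis unfolding Phi_def eq by (rule rangeI)
qed

lemma obj4_tendsto:
  assumes lim: "\<And>n. n \<le> N \<Longrightarrow> (\<lambda>j. ap j n) \<longlonglongrightarrow> \<phi> n"
  shows "(\<lambda>j. obj4 dh lam N Mt Mr \<theta> G (ap j)) \<longlonglongrightarrow> obj4 dh lam N Mt Mr \<theta> G \<phi>"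
  unfolding obj4_def
  by (intro tendsto_intros lim) auto

lemma gamma4_Phi:
  assumes bdd: "bdd_above (range (obj4 dh lam N Mt Mr \<theta> G))"
  shows "gamma4 dh lam N Mt Mr \<theta> G = (SUP \<phi>\<in>Phi. obj4 dh lam N Mt Mr \<theta> G \<phi>)"
proof (rule antisym)
  let ?f = "obj4 dh lam N Mt Mr \<theta> G"
  have Pne: "Phi \<noteq> {}" using ap_in_Phi by blast
  have bddP: "bdd_above (?f ` Phi)" using bdd by (rule bdd_above_mono) blast
  show "(SUP \<phi>\<in>Phi. ?f \<phi>) \<le> gamma4 dh lam N Mt Mr \<theta> G"
    unfolding gamma4_def by (rule cSUP_subset_mono[OF Pne bdd]) simp_all
  show "gamma4 dh lam N Mt Mr \<theta> G \<le> (SUP \<phi>\<in>Phi. ?f \<phi>)"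
    unfolding gamma4_def
  proof (rule cSUP_least)
    show "UNIV \<noteq> {}" by blast
    fix \<phi> :: "nat \<Rightarrow> real"
    define ap where "ap j = (\<lambda>n. if n < Suc N then real_of_int \<lfloor>\<phi> n * real (Suc j)\<rfloor> / real (Suc j) else 0)" for j
    have apP: "ap j \<in> Phi" for j unfolding ap_def by (rule ap_in_Phi)
    have lim: "(\<lambda>j. ap j n) \<longlonglongrightarrow> \<phi> n" if "n \<le> N" for n
    proof -
      have "(\<lambda>j. ap j n) = (\<lambda>j. real_of_int \<lfloor>\<phi> n * real (Suc j)\<rfloor> / real (Suc j))"
        using that by (simp add: ap_def del: of_nat_Suc)
      then show ?thesis using floor_approx[of "\<phi> n"] by simp
    qed
    have "(\<lambda>j. ?f (ap j)) \<longlonglongrightarrow> ?f \<phi>"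
      by (rule obj4_tendsto[OF lim])
    moreover have "\<forall>j. ?f (ap j) \<le> (SUP \<phi>\<in>Phi. ?f \<phi>)"
      using cSUP_upper[OF apP bddP] by blast
    ultimately show "?f \<phi> \<le> (SUP \<phi>\<in>Phi. ?f \<phi>)"
      by (intro LIMSEQ_le_const2) auto
  qed
qed



lemma cmod_avec[simp]: "cmod (avec dh lam N \<theta> n) = 1"
  by (simp add: avec_def)

lemma cmod_bvec[simp]: "cmod (bvec dh lam N \<theta> n) = 1"
  by (simp add: bvec_def)

lemma sum_dentry_sq': "(\<Sum>m=Suc 0..K. (dentry K m)\<^sup>2) = real K * ((real K)\<^sup>2 - 1) / 3"
  using sum_dentry_sq by simp

lemma A0_val: "(\<Sum>m=1..Mr. (cmod (complex_of_real (dentry Mr m) * bvec dh lam Mr \<theta> m))\<^sup>2) = real Mr * ((real Mr)\<^sup>2 - 1) / 3"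
  by (simp add: norm_mult sum_dentry_sq')

lemma A0_nonneg: "0 \<le> (\<Sum>m=1..Mr. (cmod (complex_of_real (dentry Mr m) * bvec dh lam Mr \<theta> m))\<^sup>2)"
  by (intro sum_nonneg) simp

lemma B0_val: "(\<Sum>m=1..Mr. (cmod (bvec dh lam Mr \<theta> m))\<^sup>2) = real Mr"
  by simp

lemma cs_complex:
  fixes z c :: "nat \<Rightarrow> complex"
  shows "(cmod (\<Sum>n\<in>S. z n * c n))\<^sup>2 \<le> (\<Sum>n\<in>S. (cmod (c n))\<^sup>2) * (\<Sum>n\<in>S. (cmod (z n))\<^sup>2)"
proof -
  have "cmod (\<Sum>n\<in>S. z n * c n) \<le> (\<Sum>n\<in>S. cmod (z n) * cmod (c n))"
    by (rule order_trans[OF norm_sum]) (simp add: norm_mult)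
  then have "(cmod (\<Sum>n\<in>S. z n * c n))\<^sup>2 \<le> (\<Sum>n\<in>S. cmod (z n) * cmod (c n))\<^sup>2"
    by (rule power_mono) simp
  also have "\<dots> \<le> (\<Sum>n\<in>S. (cmod (z n))\<^sup>2) * (\<Sum>n\<in>S. (cmod (c n))\<^sup>2)"
    by (rule Cauchy_Schwarz_ineq_sum)
  finally show ?thesis by (simp add: mult.commute)
qed

definition TT :: "nat \<Rightarrow> nat \<Rightarrow> (nat \<times> nat \<Rightarrow> complex) \<Rightarrow> real" where
  "TT N Mt G = (\<Sum>k=1..Mt. \<Sum>n=1..N. (cmod (G (n, k)))\<^sup>2)"

definition CC :: "nat \<Rightarrow> nat \<Rightarrow> real" where
  "CC N Mr = real Mr * ((real Mr)\<^sup>2 - 1) / 3 * real N + real Mr * (real N * ((real N)\<^sup>2 - 1) / 3)"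

lemma obj4_nonneg: "0 \<le> obj4 dh lam N Mt Mr \<theta> G \<phi>"
  unfolding obj4_def by (intro add_nonneg_nonneg mult_nonneg_nonneg sum_nonneg) auto

lemma obj4_upper: "obj4 dh lam N Mt Mr \<theta> G \<phi> \<le> CC N Mr * TT N Mt G"
proof -
  let ?e = "\<lambda>n. exp (\<i> * complex_of_real (\<phi> n))"
  let ?a = "avec dh lam N \<theta>"
  let ?A0 = "(\<Sum>m=1..Mr. (cmod (complex_of_real (dentry Mr m) * bvec dh lam Mr \<theta> m))\<^sup>2)"
  let ?B0 = "(\<Sum>m=1..Mr. (cmod (bvec dh lam Mr \<theta> m))\<^sup>2)"
  let ?S1 = "(\<Sum>k=1..Mt. (cmod (\<Sum>n=1..N. G (n, k) * ?e n * ?a n))\<^sup>2)"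
  let ?S2 = "(\<Sum>k=1..Mt. (cmod (\<Sum>n=1..N. G (n, k) * ?e n * complex_of_real (dentry N n) * ?a n))\<^sup>2)"
  have S1': "?S1 \<le> (\<Sum>k=1..Mt. real N * (\<Sum>n=1..N. (cmod (G (n, k)))\<^sup>2))"
  proof (rule sum_mono)
    fix k
    have "(cmod (\<Sum>n=1..N. G (n, k) * ?e n * ?a n))\<^sup>2 = (cmod (\<Sum>n=1..N. G (n, k) * (?e n * ?a n)))\<^sup>2"
      by (simp add: mult.assoc)
    also have "\<dots> \<le> (\<Sum>n=1..N. (cmod (?e n * ?a n))\<^sup>2) * (\<Sum>n=1..N. (cmod (G (n, k)))\<^sup>2)"
      by (rule cs_complex)
    also have "\<dots> = real N * (\<Sum>n=1..N. (cmod (G (n, k)))\<^sup>2)"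
      by (simp add: norm_mult)
    finally show "(cmod (\<Sum>n=1..N. G (n, k) * ?e n * ?a n))\<^sup>2 \<le> real N * (\<Sum>n=1..N. (cmod (G (n, k)))\<^sup>2)" .
  qed
  have S1: "?S1 \<le> real N * TT N Mt G"
    using S1' by (simp add: TT_def sum_distrib_left)
  have S2': "?S2 \<le> (\<Sum>k=1..Mt. (real N * ((real N)\<^sup>2 - 1) / 3) * (\<Sum>n=1..N. (cmod (G (n, k)))\<^sup>2))"
  proof (rule sum_mono)
    fix k
    have "(cmod (\<Sum>n=1..N. G (n, k) * ?e n * complex_of_real (dentry N n) * ?a n))\<^sup>2
        = (cmod (\<Sum>n=1..N. G (n, k) * (?e n * complex_of_real (dentry N n) * ?a n)))\<^sup>2"
      by (simp add: mult.assoc)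
    also have "\<dots> \<le> (\<Sum>n=1..N. (cmod (?e n * complex_of_real (dentry N n) * ?a n))\<^sup>2) * (\<Sum>n=1..N. (cmod (G (n, k)))\<^sup>2)"
      by (rule cs_complex)
    also have "\<dots> = (real N * ((real N)\<^sup>2 - 1) / 3) * (\<Sum>n=1..N. (cmod (G (n, k)))\<^sup>2)"
      by (simp add: norm_mult sum_dentry_sq')
    finally show "(cmod (\<Sum>n=1..N. G (n, k) * ?e n * complex_of_real (dentry N n) * ?a n))\<^sup>2
        \<le> (real N * ((real N)\<^sup>2 - 1) / 3) * (\<Sum>n=1..N. (cmod (G (n, k)))\<^sup>2)" .
  qed
  have S2: "?S2 \<le> (real N * ((real N)\<^sup>2 - 1) / 3) * TT N Mt G"
    using S2' by (simp add: TT_def sum_distrib_left)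
  have "obj4 dh lam N Mt Mr \<theta> G \<phi> = ?S1 * ?A0 + ?B0 * ?S2"
    unfolding obj4_def ..
  also have "\<dots> \<le> (real N * TT N Mt G) * ?A0 + ?B0 * ((real N * ((real N)\<^sup>2 - 1) / 3) * TT N Mt G)"
    by (intro add_mono mult_right_mono mult_left_mono S1 S2 A0_nonneg) simp
  also have "\<dots> = CC N Mr * TT N Mt G"
    unfolding A0_val B0_val CC_def by (simp add: algebra_simps)
  finally show ?thesis .
qed

lemma obj4_bdd: "bdd_above (range (obj4 dh lam N Mt Mr \<theta> G))"
  using obj4_upper by (intro bdd_aboveI2) blast

lemma gamma4_upper: "gamma4 dh lam N Mt Mr \<theta> G \<le> CC N Mr * TT N Mt G"
  unfolding gamma4_def by (rule cSUP_least) (auto intro: obj4_upper)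

lemma gamma4_ge: "obj4 dh lam N Mt Mr \<theta> G \<phi> \<le> gamma4 dh lam N Mt Mr \<theta> G"
  unfolding gamma4_def by (rule cSUP_upper[OF _ obj4_bdd]) simp

lemma gamma4_nonneg: "0 \<le> gamma4 dh lam N Mt Mr \<theta> G"
  using obj4_nonneg gamma4_ge by (rule order_trans)

lemma obj4_meas[measurable]: "(\<lambda>G. obj4 dh lam N Mt Mr \<theta> G \<phi>) \<in> borel_measurable (MM N' Mt')"
  unfolding obj4_def by measurable

lemma gamma4_meas[measurable]: "(\<lambda>G. gamma4 dh lam N Mt Mr \<theta> G) \<in> borel_measurable (MM N' Mt')"
proof -
  have "(\<lambda>G. SUP \<phi>\<in>Phi. obj4 dh lam N Mt Mr \<theta> G \<phi>) \<in> borel_measurable (MM N' Mt')"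
    by (rule borel_measurable_cSUP[OF countable_Phi obj4_meas]) (rule bdd_above_mono[OF obj4_bdd], blast)
  then show ?thesis
    by (simp add: gamma4_Phi[OF obj4_bdd])
qed



definition ww :: "real \<Rightarrow> real \<Rightarrow> nat \<Rightarrow> real \<Rightarrow> (nat \<times> nat \<Rightarrow> complex) \<Rightarrow> nat \<Rightarrow> complex" where
  "ww dh lam N \<theta> G n = uu (G (n, 1) * complex_of_real (dentry N n) * avec dh lam N \<theta> n)
      * complex_of_real (dentry N n) * avec dh lam N \<theta> n"

lemma ww_meas[measurable]: "(\<lambda>G. ww dh lam N \<theta> G n) \<in> borel_measurable (MM N' Mt')"
  unfolding ww_def by measurable

lemma cmod_ww: "cmod (ww dh lam N \<theta> G n) = \<bar>dentry N n\<bar>"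
  by (simp add: ww_def norm_mult)

lemma obj4_lower:
  assumes Mt: "1 \<le> Mt"
  shows "real Mr * ((\<Sum>n=1..N. cmod (G (n, 1)) * \<bar>dentry N n\<bar>)\<^sup>2
          + (\<Sum>k=2..Mt. (cmod (\<Sum>n=1..N. G (n, k) * ww dh lam N \<theta> G n))\<^sup>2))
       \<le> obj4 dh lam N Mt Mr \<theta> G (\<lambda>n. - Arg (G (n, 1) * complex_of_real (dentry N n) * avec dh lam N \<theta> n))"
proof -
  let ?a = "avec dh lam N \<theta>"
  let ?z = "\<lambda>n. G (n, 1) * complex_of_real (dentry N n) * ?a n"
  let ?\<phi> = "\<lambda>n. - Arg (?z n)"
  let ?e = "\<lambda>n. exp (\<i> * complex_of_real (?\<phi> n))"
  let ?A0 = "(\<Sum>m=1..Mr. (cmod (complex_of_real (dentry Mr m) * bvec dh lam Mr \<theta> m))\<^sup>2)"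
  let ?B0 = "(\<Sum>m=1..Mr. (cmod (bvec dh lam Mr \<theta> m))\<^sup>2)"
  let ?S1 = "(\<Sum>k=1..Mt. (cmod (\<Sum>n=1..N. G (n, k) * ?e n * ?a n))\<^sup>2)"
  let ?S2 = "(\<Sum>k=1..Mt. (cmod (\<Sum>n=1..N. G (n, k) * ?e n * complex_of_real (dentry N n) * ?a n))\<^sup>2)"
  have e: "?e n = uu (?z n)" for n by (rule exp_Arg_uu)
  have inner: "(\<Sum>n=1..N. G (n, k) * ?e n * complex_of_real (dentry N n) * ?a n) = (\<Sum>n=1..N. G (n, k) * ww dh lam N \<theta> G n)" for k
    by (intro sum.cong refl) (simp only: exp_Arg_uu ww_def mult.assoc)
  have c1: "(\<Sum>n=1..N. G (n, 1) * ww dh lam N \<theta> G n) = complex_of_real (\<Sum>n=1..N. cmod (G (n, 1)) * \<bar>dentry N n\<bar>)"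
    unfolding of_real_sum
  proof (intro sum.cong refl)
    fix n
    have "G (n, 1) * ww dh lam N \<theta> G n = ?z n * uu (?z n)"
      by (simp add: ww_def mult_ac)
    also have "\<dots> = complex_of_real (cmod (?z n))" by (rule z_uu)
    also have "\<dots> = complex_of_real (cmod (G (n, 1)) * \<bar>dentry N n\<bar>)" by (simp add: norm_mult)
    finally show "G (n, 1) * ww dh lam N \<theta> G n = complex_of_real (cmod (G (n, 1)) * \<bar>dentry N n\<bar>)" .
  qed
  have X0: "0 \<le> (\<Sum>n=1..N. cmod (G (n, 1)) * \<bar>dentry N n\<bar>)" by (intro sum_nonneg) simp
  have "?S2 = (\<Sum>k=1..Mt. (cmod (\<Sum>n=1..N. G (n, k) * ww dh lam N \<theta> G n))\<^sup>2)"
    by (simp only: inner)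
  also have "\<dots> = (cmod (\<Sum>n=1..N. G (n, 1) * ww dh lam N \<theta> G n))\<^sup>2
       + (\<Sum>k=Suc 1..Mt. (cmod (\<Sum>n=1..N. G (n, k) * ww dh lam N \<theta> G n))\<^sup>2)"
    by (rule sum.atLeast_Suc_atMost[OF Mt])
  also have "\<dots> = (\<Sum>n=1..N. cmod (G (n, 1)) * \<bar>dentry N n\<bar>)\<^sup>2
       + (\<Sum>k=2..Mt. (cmod (\<Sum>n=1..N. G (n, k) * ww dh lam N \<theta> G n))\<^sup>2)"
    unfolding c1 norm_of_real using X0 by (simp add: numeral_2_eq_2)
  finally have S2: "?S2 = (\<Sum>n=1..N. cmod (G (n, 1)) * \<bar>dentry N n\<bar>)\<^sup>2
       + (\<Sum>k=2..Mt. (cmod (\<Sum>n=1..N. G (n, k) * ww dh lam N \<theta> G n))\<^sup>2)" .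
  have "obj4 dh lam N Mt Mr \<theta> G ?\<phi> = ?S1 * ?A0 + ?B0 * ?S2"
    unfolding obj4_def ..
  moreover have "0 \<le> ?S1 * ?A0" by (intro mult_nonneg_nonneg sum_nonneg) auto
  ultimately show ?thesis unfolding S2 B0_val by linarith
qed



lemma TT_int:
  shows "integrable (MM N Mt) (TT N Mt)" and "(\<integral>G. TT N Mt G \<partial>MM N Mt) = real N * real Mt"
proof -
  have mem: "(n, k) \<in> {1..N} \<times> {1..Mt}" if "n \<in> {1..N}" "k \<in> {1..Mt}" for n k using that by auto
  show "integrable (MM N Mt) (TT N Mt)"
    unfolding TT_def[abs_def] using sq_int_MM(1)[OF mem]
    by (intro Bochner_Integration.integrable_sum) auto
  have "(\<integral>G. TT N Mt G \<partial>MM N Mt) = (\<Sum>k=1..Mt. \<Sum>n=1..N. (\<integral>G. (cmod (G (n, k)))\<^sup>2 \<partial>MM N Mt))"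
    unfolding TT_def using sq_int_MM(1)[OF mem]
    by (subst Bochner_Integration.integral_sum) (auto intro!: sum.cong Bochner_Integration.integral_sum Bochner_Integration.integrable_sum)
  also have "\<dots> = (\<Sum>k=1..Mt. \<Sum>n=1..N. (1::real))"
    by (intro sum.cong refl sq_int_MM(2)[OF mem]) auto
  also have "\<dots> = real N * real Mt" by simp
  finally show "(\<integral>G. TT N Mt G \<partial>MM N Mt) = real N * real Mt" .
qed

theorem proposition7:
  fixes dh lam \<theta> :: real and N Mt Mr :: nat
  assumes "dh > 0" and "lam > 0"
    and "N > 0" and "even N" and "Mt > 0" and "Mr > 0"
  shows "pi * real Mr * real N ^ 4 / 16 + real Mr * (real Mt - 1) * real N ^ 2 / 2
           \<le> (\<integral>G. gamma4 dh lam N Mt Mr \<theta> G \<partial>Gt_measure N Mt)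
         \<and> (\<integral>G. gamma4 dh lam N Mt Mr \<theta> G \<partial>Gt_measure N Mt)
           \<le> real Mt * real Mr * (real Mr ^ 2 - 1) * real N ^ 2 / 3
              + real Mt * real Mr * real N ^ 2 * (real N ^ 2 - 1) / 3"
proof -
  note N = \<open>N > 0\<close> \<open>even N\<close>
  have Mt: "1 \<le> Mt" using \<open>Mt > 0\<close> by simp
  have N2: "2 \<le> N" using N by (auto elim!: evenE)
  let ?g = "gamma4 dh lam N Mt Mr \<theta>"
  have GM: "Gt_measure N Mt = MM N Mt" by (simp add: Gt_measure_def)
  interpret P: prob_space "MM N Mt" by (rule prob_MM)
  have gint: "integrable (MM N Mt) ?g"
  proof (rule Bochner_Integration.integrable_bound)
    show "integrable (MM N Mt) (\<lambda>G. CC N Mr * TT N Mt G)"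
      using TT_int(1) by (rule integrable_mult_right)
    show "?g \<in> borel_measurable (MM N Mt)" by measurable
    show "AE G in MM N Mt. norm (?g G) \<le> norm (CC N Mr * TT N Mt G)"
    proof (intro AE_I2)
      fix G
      have "0 \<le> ?g G" by (rule gamma4_nonneg)
      moreover have "?g G \<le> CC N Mr * TT N Mt G" by (rule gamma4_upper)
      ultimately show "norm (?g G) \<le> norm (CC N Mr * TT N Mt G)" by simp
    qed
  qed
  have "(\<integral>G. ?g G \<partial>MM N Mt) \<le> (\<integral>G. CC N Mr * TT N Mt G \<partial>MM N Mt)"
    by (intro integral_mono gint integrable_mult_right TT_int(1) gamma4_upper)
  also have "\<dots> = CC N Mr * (real N * real Mt)"
    by (subst integral_mult_right_zero) (simp only: TT_int(2))
  also have "\<dots> = real Mt * real Mr * (real Mr ^ 2 - 1) * real N ^ 2 / 3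
              + real Mt * real Mr * real N ^ 2 * (real N ^ 2 - 1) / 3"
    by (simp add: CC_def power2_eq_square field_simps)
  finally have upper: "(\<integral>G. ?g G \<partial>MM N Mt) \<le> real Mt * real Mr * (real Mr ^ 2 - 1) * real N ^ 2 / 3
              + real Mt * real Mr * real N ^ 2 * (real N ^ 2 - 1) / 3" .
  let ?X = "\<lambda>G. (\<Sum>n=1..N. cmod (G (n, 1)) * \<bar>dentry N n\<bar>)"
  let ?Y = "\<lambda>k G. (cmod (\<Sum>n=1..N. G (n, k) * ww dh lam N \<theta> G n))\<^sup>2"
  let ?L = "\<lambda>G. real Mr * ((?X G)\<^sup>2 + (\<Sum>k=2..Mt. ?Y k G))"
  have D2: "(\<Sum>n=1..N. \<bar>dentry N n\<bar>\<^sup>2) = real N * ((real N)\<^sup>2 - 1) / 3"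
    using sum_dentry_sq[of N] by simp
  have Yk: "integrable (MM N Mt) (?Y k) \<and> (\<integral>G. ?Y k G \<partial>MM N Mt) = real N * ((real N)\<^sup>2 - 1) / 3"
    if k: "k \<in> {2..Mt}" for k
  proof -
    have k2: "2 \<le> k" "k \<le> Mt" using k by auto
    have wdep: "ww dh lam N \<theta> G' n = ww dh lam N \<theta> G n"
      if "n \<in> {1..N}" "\<And>n'. n' \<in> {1..N} \<Longrightarrow> G' (n', 1) = G (n', 1)" for G G' n
      using that by (simp add: ww_def)
    note c = colk[OF k2 ww_meas cmod_ww wdep]
    show ?thesis
    proof (intro conjI)
      show "integrable (MM N Mt) (?Y k)" by (rule c(1))
      show "(\<integral>G. ?Y k G \<partial>MM N Mt) = real N * ((real N)\<^sup>2 - 1) / 3"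
        using c(2) D2 by (rule trans)
    qed
  qed
  have X: "integrable (MM N Mt) (\<lambda>G. (?X G)\<^sup>2)"
      "(sqrt pi / 2 * (\<Sum>n=1..N. \<bar>dentry N n\<bar>))\<^sup>2 \<le> (\<integral>G. (?X G)\<^sup>2 \<partial>MM N Mt)"
    using col1[OF Mt, of "\<lambda>n. \<bar>dentry N n\<bar>"] by auto
  have Lint: "integrable (MM N Mt) ?L"
    using X(1) Yk by (intro integrable_mult_right Bochner_Integration.integrable_add Bochner_Integration.integrable_sum) auto
  have "(\<integral>G. ?L G \<partial>MM N Mt) = real Mr * ((\<integral>G. (?X G)\<^sup>2 \<partial>MM N Mt) + (\<Sum>k=2..Mt. (\<integral>G. ?Y k G \<partial>MM N Mt)))"
  proof -
    have Yi: "integrable (MM N Mt) (\<lambda>G. \<Sum>k=2..Mt. ?Y k G)"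
      using Yk by (intro Bochner_Integration.integrable_sum) auto
    have "(\<integral>G. ?L G \<partial>MM N Mt) = real Mr * (\<integral>G. (?X G)\<^sup>2 + (\<Sum>k=2..Mt. ?Y k G) \<partial>MM N Mt)"
      by (rule integral_mult_right_zero)
    also have "(\<integral>G. (?X G)\<^sup>2 + (\<Sum>k=2..Mt. ?Y k G) \<partial>MM N Mt) = (\<integral>G. (?X G)\<^sup>2 \<partial>MM N Mt) + (\<integral>G. (\<Sum>k=2..Mt. ?Y k G) \<partial>MM N Mt)"
      by (rule Bochner_Integration.integral_add[OF X(1) Yi])
    also have "(\<integral>G. (\<Sum>k=2..Mt. ?Y k G) \<partial>MM N Mt) = (\<Sum>k=2..Mt. (\<integral>G. ?Y k G \<partial>MM N Mt))"
      using Yk by (intro Bochner_Integration.integral_sum) auto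
    finally show ?thesis .
  qed
  also have "(\<Sum>k=2..Mt. (\<integral>G. ?Y k G \<partial>MM N Mt)) = (real Mt - 1) * (real N * ((real N)\<^sup>2 - 1) / 3)"
  proof -
    have "(\<Sum>k=2..Mt. (\<integral>G. ?Y k G \<partial>MM N Mt)) = (\<Sum>k=2..Mt. real N * ((real N)\<^sup>2 - 1) / 3)"
      using Yk by (intro sum.cong) auto
    also have "\<dots> = real (Mt - 1) * (real N * ((real N)\<^sup>2 - 1) / 3)" by simp
    finally show ?thesis using Mt by (simp add: of_nat_diff)
  qed
  finally have EL: "(\<integral>G. ?L G \<partial>MM N Mt) = real Mr * ((\<integral>G. (?X G)\<^sup>2 \<partial>MM N Mt) + (real Mt - 1) * (real N * ((real N)\<^sup>2 - 1) / 3))" .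
  have "(\<integral>G. ?L G \<partial>MM N Mt) \<le> (\<integral>G. ?g G \<partial>MM N Mt)"
  proof (intro integral_mono Lint gint)
    fix G
    show "?L G \<le> ?g G"
      by (rule order_trans[OF obj4_lower[OF Mt] gamma4_ge])
  qed
  moreover have "pi * real Mr * real N ^ 4 / 16 + real Mr * (real Mt - 1) * real N ^ 2 / 2 \<le> (\<integral>G. ?L G \<partial>MM N Mt)"
  proof -
    have s: "(sqrt pi / 2 * (\<Sum>n=1..N. \<bar>dentry N n\<bar>))\<^sup>2 = pi * real N ^ 4 / 16"
      unfolding sum_abs_dentry[OF N(2)] by (simp add: power_mult_distrib power_divide)
    have q: "real N ^ 2 / 2 \<le> real N * ((real N)\<^sup>2 - 1) / 3"
    proof -
      have "0 \<le> real N * ((2 * real N + 1) * (real N - 2))" using N2 by simp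
      then show ?thesis by (simp add: algebra_simps power2_eq_square)
    qed
    have "real Mr * (real Mt - 1) * real N ^ 2 / 2 \<le> real Mr * ((real Mt - 1) * (real N * ((real N)\<^sup>2 - 1) / 3))"
      using q Mt by (simp add: mult_left_mono mult.assoc)
    moreover have "pi * real Mr * real N ^ 4 / 16 \<le> real Mr * (\<integral>G. (?X G)\<^sup>2 \<partial>MM N Mt)"
    proof -
      have "pi * real N ^ 4 / 16 \<le> (\<integral>G. (?X G)\<^sup>2 \<partial>MM N Mt)" using X(2) unfolding s .
      then have "real Mr * (pi * real N ^ 4 / 16) \<le> real Mr * (\<integral>G. (?X G)\<^sup>2 \<partial>MM N Mt)"
        by (rule mult_left_mono) simp
      then show ?thesis by (simp add: mult_ac)
    qed
    ultimately show ?thesis unfolding EL by (subst distrib_left) linarith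
  qed
  ultimately have lower: "pi * real Mr * real N ^ 4 / 16 + real Mr * (real Mt - 1) * real N ^ 2 / 2 \<le> (\<integral>G. ?g G \<partial>MM N Mt)"
    by (rule_tac order_trans) 
  show ?thesis unfolding GM using lower upper by (rule conjI)
qed


end
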